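(* Assume Assumption (S) of the context. Let $u_h(\cdot,t)\in\mathbb V^k$ and let numerical flux values $\hat f_{i,j}$ ($j=0,\dots,k+1$, for every cell $i$) be given, with $\hat f_{i,0}=\hat f_{i-\frac12}$ and $\hat f_{i,k+1}=\hat f_{i+\frac12}$ the interface fluxes. Then the semi-discrete spectral volume relations $$((u_h)_t,\omega^* )=\sum_i\sum_{j=0}^k\omega^*_{i,j}(\hat f_{i,j}-\hat f_{i,j+1})\quad\forall\omega^*\in\mathbb V^{k,*}$$ hold if and only if $$((u_h)_t,\omega)_*=\sum_i\Big(Q_i^k(\hat f\omega_x)+\omega(x_{i-\frac12}^+)\hat f_{i-\frac12}-\omega(x_{i+\frac12}^-)\hat f_{i+\frac12}\Big)\quad\forall\omega\in\mathbb V^k,$$ where $Q_i^k(\hat f\omega_x):=\sum_{j=0}^{k+1}A_{i,j}\hat f_{i,j}\,(\omega|_{I_i})'(x_{i,j})$.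
   Context: Let $\Omega=[a,b]$ be partitioned into finitely many cells $I_i=[x_{i-\frac12},x_{i+\frac12}]$ with sizes $h_i$. $(\cdot,\cdot)$ is the $L^2(\Omega)$ inner product, $(\cdot,\cdot)_{I_i}$ the $L^2(I_i)$ inner product. $\mathbb V^k=\{v\in L^2(\Omega): v|_{I_i}\in\mathbb P^k(I_i)\ \forall i\}$. Each $I_i$ has subdivision points $x_{i-\frac12}=x_{i,0}<x_{i,1}<\dots<x_{i,k}<x_{i,k+1}=x_{i+\frac12}$, control volumes $I_{i,j}=[x_{i,j},x_{i,j+1}]$, $j=0,\dots,k$; $\mathbb V^{k,*}$ is the space of functions constant on each $I_{i,j}$, and $\omega^*_{i,j}$ is the value of $\omega^*$ on $I_{i,j}$. On each $I_i$ a quadrature $Q_i^k(v)=\sum_{j=0}^{k+1}A_{i,j}v(x_{i,j})$ is given with error $R_i^k(v)=\int_{I_i}v\,dx-Q_i^k(v)$, exact on $\mathbb P^{k-1}(I_i)$. $M^*:\mathbb V^k\to\mathbb V^{k,*}$ is defined cellwise: for $v=\omega|_{I_i}$, $(M^*\omega)|_{I_{i,0}}=v(x_{i-\frac12})+A_{i,0}v'(x_{i-\frac12})$ and $(M^*\omega)|_{I_{i,j}}-(M^*\omega)|_{I_{i,j-1}}=A_{i,j}v'(x_{i,j})$, $j=1,\dots,k$ (one-sided values from inside $I_i$). $\omega(x^\pm)$ denote right/left limits. $L_{i,\ell}$ is the shifted Legendre polynomial of degree $\ell$ on $I_i$ with $L_{i,\ell}(x_{i+\frac12})=1$, $(L_{i,\ell},L_{i,m})_{I_i}=\delta_{\ell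 m}h_i/(2\ell+1)$. Assumption (S): $k\ge1$ and for every $i$, (1) $R_i^k(v)=0$ for all $v\in\mathbb P^{2k-1}(I_i)$, and (2) $\frac{h_i}{2k-1}-Q_i^k(L_{i,k+1}L_{i,k-1})>0$. Under (S), $(v,\omega)_*:=(v,M^*\omega)$ is an inner product on $\mathbb V^k$. *)

theory Defs
  imports "HOL-Analysis.Analysis" "HOL-Computational_Algebra.Polynomial"
begin

(* Mesh conventions: cells i = 0..N-1; cell i is [xI i, xI (Suc i)], i.e.
   x_{i-1/2} = xI i and x_{i+1/2} = xI (Suc i).  Subdivision points of cell i
   are x i j, j = 0..k+1.  A function in V^k is given cellwise by
   polynomials w :: nat => real poly (w i = restriction to I_i), a function in
   V^{k,*} by its values ws i j on I_{i,j}, j = 0..k. *)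

definition mesh :: "real \<Rightarrow> real \<Rightarrow> nat \<Rightarrow> nat \<Rightarrow> (nat \<Rightarrow> real) \<Rightarrow> (nat \<Rightarrow> nat \<Rightarrow> real) \<Rightarrow> bool" where
  "mesh a b N k xI x \<longleftrightarrow> 0 < N \<and> xI 0 = a \<and> xI N = b \<and>
     (\<forall>i<N. x i 0 = xI i \<and> x i (Suc k) = xI (Suc i) \<and> (\<forall>j\<le>k. x i j < x i (Suc j)))"

definition in_Vk :: "nat \<Rightarrow> nat \<Rightarrow> (nat \<Rightarrow> real poly) \<Rightarrow> bool" where
  "in_Vk N k w \<longleftrightarrow> (\<forall>i<N. degree (w i) \<le> k)"

definition quad :: "nat \<Rightarrow> (nat \<Rightarrow> nat \<Rightarrow> real) \<Rightarrow> (nat \<Rightarrow> nat \<Rightarrow> real) \<Rightarrow> nat \<Rightarrow> (real \<Rightarrow> real) \<Rightarrow> real" where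
  "quad k A x i v = (\<Sum>j\<le>Suc k. A i j * v (x i j))"

(* shifted Legendre polynomial of degree n on [c,d], normalised by L(d) = 1:
   L(x) = sum_{m=0}^n C(n,m) C(n+m,m) ((x-d)/(d-c))^m *)
definition shifted_legendre :: "real \<Rightarrow> real \<Rightarrow> nat \<Rightarrow> real \<Rightarrow> real" where
  "shifted_legendre c d n y =
     (\<Sum>m\<le>n. real (n choose m) * real ((n + m) choose m) * ((y - d) / (d - c)) ^ m)"

definition assumption_S :: "nat \<Rightarrow> nat \<Rightarrow> (nat \<Rightarrow> real) \<Rightarrow> (nat \<Rightarrow> nat \<Rightarrow> real) \<Rightarrow> (nat \<Rightarrow> nat \<Rightarrow> real) \<Rightarrow> bool" where
  "assumption_S N k xI x A \<longleftrightarrow> 1 \<le> k \<and>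
     (\<forall>i<N.
        (\<forall>p::real poly. degree p \<le> 2 * k - 1 \<longrightarrow>
            integral {xI i .. xI (Suc i)} (poly p) - quad k A x i (poly p) = 0) \<and>
        (xI (Suc i) - xI i) / (2 * real k - 1)
          - quad k A x i (\<lambda>y. shifted_legendre (xI i) (xI (Suc i)) (Suc k) y
                              * shifted_legendre (xI i) (xI (Suc i)) (k - 1) y) > 0)"

definition Mstar :: "(nat \<Rightarrow> nat \<Rightarrow> real) \<Rightarrow> (nat \<Rightarrow> nat \<Rightarrow> real) \<Rightarrow> (nat \<Rightarrow> real poly) \<Rightarrow> nat \<Rightarrow> nat \<Rightarrow> real" where
  "Mstar A x w i j = poly (w i) (x i 0) + (\<Sum>l\<le>j. A i l * poly (pderiv (w i)) (x i l))"

definition ip_star_fun :: "nat \<Rightarrow> nat \<Rightarrow> (nat \<Rightarrow> nat \<Rightarrow> real) \<Rightarrow> (nat \<Rightarrow> real poly) \<Rightarrow> (nat \<Rightarrow> nat \<Rightarrow> real) \<Rightarrow> real" where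
  "ip_star_fun N k x v ws = (\<Sum>i<N. \<Sum>j\<le>k. ws i j * integral {x i j .. x i (Suc j)} (poly (v i)))"

definition ip_star :: "nat \<Rightarrow> nat \<Rightarrow> (nat \<Rightarrow> nat \<Rightarrow> real) \<Rightarrow> (nat \<Rightarrow> nat \<Rightarrow> real) \<Rightarrow> (nat \<Rightarrow> real poly) \<Rightarrow> (nat \<Rightarrow> real poly) \<Rightarrow> real" where
  "ip_star N k A x v w = ip_star_fun N k x v (Mstar A x w)"

end

theory Submission
  imports Defs
begin

definition J :: "real \<Rightarrow> real \<Rightarrow> real poly \<Rightarrow> real" where
  "J c d p = integral {c..d} (poly p)"

lemma J_integrable: "poly p integrable_on {c..d::real}"
proof -
  have "continuous_on {c..d} (\<lambda>x. poly p x)" by (intro continuous_intros)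
  then show ?thesis by (rule integrable_continuous_real)
qed

lemma J_add: "J c d (p + q) = J c d p + J c d q"
  unfolding J_def poly_add by (rule integral_add) (auto intro: J_integrable)

lemma J_diff: "J c d (p - q) = J c d p - J c d q"
  unfolding J_def poly_diff by (rule integral_diff) (auto intro: J_integrable)

lemma J_smult: "J c d (smult a p) = a * J c d p"
  unfolding J_def poly_smult by (rule integral_mult_right)

lemma J_minus: "J c d (- p) = - J c d p"
  unfolding J_def poly_minus by (rule integral_neg)

lemma J_sum: "finite S \<Longrightarrow> J c d (sum f S) = (\<Sum>i\<in>S. J c d (f i))"
  unfolding J_def poly_sum by (rule integral_sum) (auto intro: J_integrable)

lemma J_ftc: "c \<le> d \<Longrightarrow> J c d (pderiv p) = poly p d - poly p c"
  unfolding J_def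
  apply (rule integral_unique)
  apply (rule fundamental_theorem_of_calculus, assumption)
  unfolding has_real_derivative_iff_has_vector_derivative[symmetric]
  by (rule has_field_derivative_at_within, rule poly_DERIV)


lemma pderiv_lin [simp]: "pderiv [:a,1::real:] = 1"
  by (simp add: pderiv_pCons)

lemma J_zero [simp]: "J c d 0 = 0"
  by (simp add: J_def poly_0[abs_def])

lemma J_ibp: "c \<le> d \<Longrightarrow> J c d (pderiv f * g) = poly (f * g) d - poly (f * g) c - J c d (f * pderiv g)"
proof -
  assume "c \<le> d"
  have "J c d (pderiv (f * g)) = J c d (f * pderiv g) + J c d (pderiv f * g)"
    by (simp add: pderiv_mult J_add mult.commute)
  then show ?thesis using J_ftc[OF \<open>c \<le> d\<close>, of "f*g"] by simp
qed

lemma dvd_pderiv_pow: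
  fixes p :: "real poly"
  assumes "[:-c,1:] ^ Suc m dvd p" shows "[:-c,1:] ^ m dvd pderiv p"
proof -
  obtain q where q: "p = [:-c,1:] ^ Suc m * q" using assms by (auto elim: dvdE)
  have "pderiv p = [:-c,1:] ^ m * ([:-c,1:] * pderiv q + smult (of_nat (Suc m)) q)"
    unfolding q pderiv_mult pderiv_power_Suc by (simp add: algebra_simps pderiv_pCons)
  then show ?thesis by simp
qed

lemma dvd_higher_pderiv:
  fixes p :: "real poly"
  shows "j \<le> m \<Longrightarrow> [:-c,1:] ^ m dvd p \<Longrightarrow> [:-c,1:] ^ (m - j) dvd (pderiv ^^ j) p"
proof (induction j)
  case 0 then show ?case by simp
next
  case (Suc j)
  then have "[:-c,1:] ^ Suc (m - Suc j) dvd (pderiv ^^ j) p"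
    by (metis Suc_diff_Suc Suc_le_lessD less_imp_le_nat)
  then show ?case by (simp add: dvd_pderiv_pow)
qed

definition phi :: "real \<Rightarrow> real \<Rightarrow> nat \<Rightarrow> real poly" where
  "phi c d n = [:-c,1:] ^ n * [:-d,1:] ^ n"

lemma phi_vanish:
  assumes "j < n"
  shows "poly ((pderiv ^^ j) (phi c d n)) c = 0" "poly ((pderiv ^^ j) (phi c d n)) d = 0"
proof -
  have "[:-c,1:] ^ (n - j) dvd (pderiv ^^ j) (phi c d n)"
    by (rule dvd_higher_pderiv) (use assms in \<open>auto simp: phi_def\<close>)
  moreover have "[:-c,1:] dvd [:-c,1:] ^ (n - j)" using assms by (simp add: dvd_power)
  ultimately show "poly ((pderiv ^^ j) (phi c d n)) c = 0"
    by (meson dvd_trans poly_eq_0_iff_dvd)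
  have "[:-d,1:] ^ (n - j) dvd (pderiv ^^ j) (phi c d n)"
    by (rule dvd_higher_pderiv) (use assms in \<open>auto simp: phi_def\<close>)
  moreover have "[:-d,1:] dvd [:-d,1:] ^ (n - j)" using assms by (simp add: dvd_power)
  ultimately show "poly ((pderiv ^^ j) (phi c d n)) d = 0"
    by (meson dvd_trans poly_eq_0_iff_dvd)
qed

lemma ibp_iter:
  assumes "c \<le> d"
  shows "j \<le> n \<Longrightarrow> J c d ((pderiv ^^ n) (phi c d n) * q) =
     (-1) ^ j * J c d ((pderiv ^^ (n - j)) (phi c d n) * (pderiv ^^ j) q)"
proof (induction j)
  case 0 then show ?case by simp
next
  case (Suc j)
  define F where "F = (pderiv ^^ (n - Suc j)) (phi c d n)"
  have nj: "n - j = Suc (n - Suc j)" using Suc by simp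
  have F: "(pderiv ^^ (n - j)) (phi c d n) = pderiv F" unfolding F_def nj by simp
  have v: "poly F c = 0" "poly F d = 0" unfolding F_def using phi_vanish Suc by auto
  have "J c d (pderiv F * (pderiv ^^ j) q) = - J c d (F * (pderiv ^^ Suc j) q)"
    using J_ibp[OF assms, of F "(pderiv ^^ j) q"] v by simp
  then show ?case using Suc F by (simp add: F_def)
qed

lemma higher_pderiv_zero: "degree q < n \<Longrightarrow> (pderiv ^^ n) (q :: real poly) = 0"
  by (rule poly_eqI) (simp add: coeff_higher_pderiv coeff_eq_0)

lemma phi_orth:
  assumes "c \<le> d" "degree q < n"
  shows "J c d ((pderiv ^^ n) (phi c d n) * q) = 0"
  using ibp_iter[OF assms(1), of n n q] higher_pderiv_zero[OF assms(2)] by simp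

lemma higher_pderiv_lin_power:
  "(pderiv ^^ m) ([:a,1:] ^ (i + m)) = smult (pochhammer (of_nat (Suc i)) m) ([:a,1::real:] ^ i)"
proof (induction m arbitrary: i)
  case 0 then show ?case by simp
next
  case (Suc m)
  have "(pderiv ^^ Suc m) ([:a,1:] ^ (i + Suc m)) = (pderiv ^^ m) (pderiv ([:a,1::real:] ^ Suc (i + m)))"
    by (simp add: funpow_Suc_right del: funpow.simps)
  also have "\<dots> = (pderiv ^^ m) (smult (of_nat (Suc (i + m))) ([:a,1::real:] ^ (i + m)))"
    by (simp del: power_Suc add: pderiv_power_Suc)
  also have "\<dots> = smult (of_nat (Suc (i + m)) * pochhammer (of_nat (Suc i)) m) ([:a,1::real:] ^ i)"
    by (simp add: higher_pderiv_smult Suc.IH)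
  finally show ?case by (simp add: pochhammer_rec' algebra_simps)
qed

lemma beta_int:
  assumes "c \<le> d"
  shows "J c d ([:-c,1:] ^ a * [:-d,1:] ^ b) =
    (-1) ^ b * fact a * fact b * (d - c) ^ (a + b + 1) / fact (a + b + 1)"
proof (induction b arbitrary: a)
  case 0
  have "J c d ([:-c,1:] ^ a) = J c d (pderiv (smult (1 / of_nat (Suc a)) ([:-c,1:] ^ Suc a)))"
    by (simp del: power_Suc add: pderiv_smult pderiv_power_Suc)
  also have "\<dots> = (d - c) ^ Suc a / of_nat (Suc a)"
    unfolding J_ftc[OF assms] by (simp del: power_Suc)
  finally show ?case by (simp add: divide_simps)
next
  case (Suc b)
  define F where "F = smult (1 / of_nat (Suc a)) ([:-c,1::real:] ^ Suc a)"
  have F: "pderiv F = [:-c,1:] ^ a" unfolding F_def by (simp del: power_Suc add: pderiv_smult pderiv_power_Suc)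
  have "J c d ([:-c,1:] ^ a * [:-d,1:] ^ Suc b) = J c d (pderiv F * [:-d,1:] ^ Suc b)" by (simp add: F)
  also have "\<dots> = - J c d (F * pderiv ([:-d,1:] ^ Suc b))"
    using J_ibp[OF assms, of F] by (simp add: F_def)
  also have "\<dots> = - (of_nat (Suc b) / of_nat (Suc a)) * J c d ([:-c,1:] ^ Suc a * [:-d,1:] ^ b)"
    unfolding F_def by (simp del: power_Suc add: pderiv_power_Suc J_smult algebra_simps)
  also have "\<dots> = - (of_nat (Suc b) / of_nat (Suc a)) * ((-1) ^ b * fact (Suc a) * fact b * (d - c) ^ (Suc a + b + 1) / fact (Suc a + b + 1))"
    by (simp only: Suc.IH)
  also have "\<dots> = (-1) ^ Suc b * fact a * fact (Suc b) * (d - c) ^ (a + Suc b + 1) / fact (a + Suc b + 1)"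
  proof -
    have e: "Suc a + b + 1 = a + Suc b + 1" by simp
    have h: "- (x / y) * (s * (y * fa) * fb * P / F) = (- s) * fa * (x * fb) * P / F"
      if "y \<noteq> 0" for x y s fa fb P F :: real using that by (simp add: field_simps)
    show ?thesis unfolding e fact_Suc[of a] fact_Suc[of b] of_nat_mult power_Suc[of "-1::real" b]
      by (rule trans[OF h]) auto
  qed
  finally show ?case .
qed


definition Lp :: "real \<Rightarrow> real \<Rightarrow> nat \<Rightarrow> real poly" where
  "Lp c d n = (\<Sum>m\<le>n. smult (real (n choose m) * real ((n + m) choose m) / (d - c) ^ m) ([:-d,1:] ^ m))"

lemma shifted_legendre_Lp: "shifted_legendre c d n y = poly (Lp c d n) y"
  unfolding shifted_legendre_def Lp_def poly_sum poly_smult poly_power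
  by (intro sum.cong refl) (simp add: power_divide)

lemma poch_fact: "pochhammer (real (Suc i)) n * fact i = fact (i + n)"
proof (induction n)
  case 0 then show ?case by simp
next
  case (Suc n)
  have "pochhammer (real (Suc i)) (Suc n) * fact i = (pochhammer (real (Suc i)) n * fact i) * (real (Suc i) + real n)"
    by (simp add: pochhammer_Suc)
  also have "\<dots> = fact (i + Suc n)" using Suc by (simp add: algebra_simps)
  finally show ?case .
qed

lemma smult_sum_right: "smult a (sum f S) = (\<Sum>i\<in>S. smult a (f i))"
  by (induction S rule: infinite_finite_induct) (auto simp: smult_add_right)

lemma Lp_rodrigues:
  assumes "c < d"
  shows "(pderiv ^^ n) (phi c d n) = smult (fact n * (d - c) ^ n) (Lp c d n)"
proof -
  define X where "X = [:-d, 1::real:]"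
  define h where "h = d - c"
  have h0: "h \<noteq> 0" using assms by (simp add: h_def)
  have cX: "[:-c,1:] = X + [:h:]" by (simp add: X_def h_def)
  have "phi c d n = (\<Sum>i\<le>n. smult (real (n choose i) * h ^ (n - i)) (X ^ (i + n)))"
    unfolding phi_def cX[symmetric, unfolded X_def] X_def[symmetric] cX binomial_ring sum_distrib_right
  proof (intro sum.cong refl)
    fix i assume "i \<in> {..n}"
    have "of_nat (n choose i) * X ^ i * [:h:] ^ (n - i) * X ^ n =
      smult (h ^ (n - i) * real (n choose i)) (X ^ i * X ^ n)"
      by (simp add: of_nat_poly poly_const_pow)
    also have "\<dots> = smult (real (n choose i) * h ^ (n - i)) (X ^ (i + n))"
      by (subst mult.commute) (simp add: power_add)
    finally show "of_nat (n choose i) * X ^ i * [:h:] ^ (n - i) * X ^ n = smult (real (n choose i) * h ^ (n - i)) (X ^ (i + n))" .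
  qed
  then have "(pderiv ^^ n) (phi c d n) = (\<Sum>i\<le>n. smult (real (n choose i) * h ^ (n - i) * pochhammer (real (Suc i)) n) (X ^ i))"
    by (simp add: higher_pderiv_sum higher_pderiv_smult X_def higher_pderiv_lin_power)
  also have "\<dots> = smult (fact n * h ^ n) (Lp c d n)"
    unfolding Lp_def smult_sum_right h_def[symmetric] X_def[symmetric]
  proof (intro sum.cong refl)
    fix i assume i: "i \<in> {..n}"
    have "real (n choose i) * h ^ (n - i) * pochhammer (real (Suc i)) n =
      fact n * h ^ n * (real (n choose i) * real ((n + i) choose i) / h ^ i)"
    proof -
      have b: "fact i * fact n * real ((n + i) choose i) = fact (i + n)"
        by (subst binomial_fact) (auto simp: add.commute)
      have P: "pochhammer (real (Suc i)) n = fact n * real ((n + i) choose i)"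
      proof -
        have "fact i * pochhammer (real (Suc i)) n = fact i * (fact n * real ((n + i) choose i))"
          using poch_fact[of i n] b by (simp add: algebra_simps)
        then show ?thesis by simp
      qed
      have hn: "h ^ n = h ^ (n - i) * h ^ i" using i by (simp flip: power_add)
      show ?thesis unfolding P hn using h0 by (simp add: field_simps)
    qed
    then show "smult (real (n choose i) * h ^ (n - i) * pochhammer (real (Suc i)) n) (X ^ i) =
      smult (fact n * h ^ n) (smult (real (n choose i) * real ((n + i) choose i) / h ^ i) (X ^ i))"
      by simp
  qed
  finally show ?thesis by (simp add: h_def)
qed


lemma degree_Lp: "degree (Lp c d n) \<le> n"
  unfolding Lp_def
  by (rule degree_sum_le) (auto intro: order.trans[OF degree_smult_le] simp: degree_linear_power)

lemma coeff_Lp: "coeff (Lp c d n) n = real ((2 * n) choose n) / (d - c) ^ n"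
proof -
  have "coeff (Lp c d n) n = (\<Sum>m\<le>n. if m = n then real ((2 * n) choose n) / (d - c) ^ n else 0)"
    unfolding Lp_def coeff_sum
  proof (intro sum.cong refl)
    fix m assume "m \<in> {..n}"
    then show "coeff (smult (real (n choose m) * real ((n + m) choose m) / (d - c) ^ m) ([:-d,1:] ^ m)) n =
      (if m = n then real ((2 * n) choose n) / (d - c) ^ n else 0)"
      by (cases "m = n") (auto simp: coeff_eq_0 degree_linear_power coeff_linear_power mult_2)
  qed
  then show ?thesis by simp
qed

lemma deg_drop:
  fixes p :: "real poly"
  assumes "degree p \<le> n" "0 < n"
  shows "degree (p - smult (coeff p n) ([:a,1:] ^ n)) < n"
proof -
  define q where "q = p - smult (coeff p n) ([:a,1:] ^ n)"
  have dq: "degree q \<le> n" unfolding q_def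
    by (rule degree_diff_le) (use assms in \<open>auto intro: order.trans[OF degree_smult_le] simp: degree_linear_power\<close>)
  have cq: "coeff q n = 0" unfolding q_def by (simp add: coeff_linear_power)
  show ?thesis
  proof (cases "q = 0")
    case True then show ?thesis using assms unfolding q_def by simp
  next
    case False
    then have "degree q \<noteq> n" using cq by auto
    then show ?thesis using dq unfolding q_def by simp
  qed
qed

lemma Lp_orth:
  assumes "c < d" "degree q < n"
  shows "J c d (Lp c d n * q) = 0"
proof -
  have "Lp c d n = smult (1 / (fact n * (d - c) ^ n)) ((pderiv ^^ n) (phi c d n))"
    using assms(1) by (simp add: Lp_rodrigues)
  then show ?thesis using phi_orth[of c d q n] assms by (simp add: J_smult)
qed

lemma Lp_Xpow:
  assumes "c < d"
  shows "J c d (Lp c d n * [:-d,1:] ^ n) = fact n * fact n * (d - c) ^ (n + 1) / fact (2 * n + 1)"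
proof -
  have hn: "(d - c) ^ n \<noteq> 0" using assms by simp
  have e1: "J c d (Lp c d n * [:-d,1:] ^ n) = 1 / (fact n * (d - c) ^ n) * J c d ((pderiv ^^ n) (phi c d n) * [:-d,1:] ^ n)"
    using assms by (simp add: Lp_rodrigues J_smult)
  have e2: "J c d ((pderiv ^^ n) (phi c d n) * [:-d,1:] ^ n) = (-1) ^ n * J c d (phi c d n * (pderiv ^^ n) ([:-d,1:] ^ n))"
    using ibp_iter[of c d n n "[:-d,1:] ^ n"] assms by simp
  have e3: "(pderiv ^^ n) ([:-d,1:] ^ n) = smult (fact n) 1"
    using higher_pderiv_lin_power[of n "-d" 0] by (simp add: pochhammer_fact)
  have e4: "J c d (phi c d n * smult (fact n) 1) = fact n * ((-1) ^ n * fact n * fact n * (d - c) ^ (n + n + 1) / fact (n + n + 1))"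
    using beta_int[of c d n n] assms by (simp add: phi_def J_smult)
  have g: "1 / (F * H) * (s * (F * (s * F * F * (H * H1) / G))) = (s * s) * (F * F * H1 / G)"
    if "F \<noteq> 0" "H \<noteq> 0" for F H s H1 G :: real using that by (simp add: field_simps)
  have ss: "(-1::real) ^ n * (-1) ^ n = 1" by (rule minus_one_mult_self)
  have pw: "(d - c) ^ (n + n + 1) = (d - c) ^ n * (d - c) ^ (n + 1)" by (simp add: power_add)
  have nn: "n + n + 1 = 2 * n + 1" by simp
  have "J c d (Lp c d n * [:-d,1:] ^ n) = 1 / (fact n * (d - c) ^ n) * ((-1) ^ n * (fact n * ((-1) ^ n * fact n * fact n * ((d - c) ^ n * (d - c) ^ (n + 1)) / fact (n + n + 1))))"
    by (simp only: e1 e2 e3 e4 pw)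
  also have "\<dots> = ((-1) ^ n * (-1) ^ n) * (fact n * fact n * (d - c) ^ (n + 1) / fact (n + n + 1))"
    by (rule g[OF fact_nonzero hn])
  finally show ?thesis unfolding ss nn by simp
qed

lemma Lp_norm:
  assumes "c < d" "0 < n"
  shows "J c d (Lp c d n * Lp c d n) = (d - c) / (2 * real n + 1)"
proof -
  define l where "l = coeff (Lp c d n) n"
  define r where "r = Lp c d n - smult l ([:-d,1:] ^ n)"
  have dr: "degree r < n" unfolding r_def l_def by (rule deg_drop[OF degree_Lp assms(2)])
  have "J c d (Lp c d n * Lp c d n) = J c d (Lp c d n * (smult l ([:-d,1:] ^ n) + r))"
    by (simp add: r_def)
  also have "\<dots> = l * J c d (Lp c d n * [:-d,1:] ^ n) + J c d (Lp c d n * r)"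
    by (simp add: distrib_left J_add J_smult)
  also have "J c d (Lp c d n * r) = 0" by (rule Lp_orth[OF assms(1) dr])
  finally have "J c d (Lp c d n * Lp c d n) = l * (fact n * fact n * (d - c) ^ (n + 1) / fact (2 * n + 1))"
    using Lp_Xpow[OF assms(1)] by simp
  also have "\<dots> = (d - c) / (2 * real n + 1)"
  proof -
    have "real ((2 * n) choose n) = fact (2 * n) / (fact n * fact n)"
      by (subst binomial_fact) (auto simp: mult_2)
    moreover have "fact (2 * n + 1) = (2 * real n + 1) * (fact (2 * n) :: real)"
      by (simp add: fact_Suc[of "2*n", simplified])
    moreover have "(d - c) ^ (n + 1) = (d - c) ^ n * (d - c)" by simp
    moreover have g: "A / (F * F) / H * (F * F * (H * h) / (K * A)) = h / K"
      if "A \<noteq> 0" "F \<noteq> 0" "H \<noteq> 0" "K \<noteq> 0" for A F H h K :: real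
      using that by (simp add: field_simps)
    ultimately show ?thesis unfolding l_def coeff_Lp using assms(1)
      by (simp only:) (rule g, auto)
  qed
  finally show ?thesis .
qed

lemma coeff_mult_le:
  fixes p q :: "real poly"
  assumes "degree p \<le> m" "degree q \<le> n"
  shows "coeff (p * q) (m + n) = coeff p m * coeff q n"
proof (cases "degree p = m \<and> degree q = n")
  case True then show ?thesis using coeff_mult_degree_sum[of p q] by simp
next
  case False
  then have "coeff p m = 0 \<or> coeff q n = 0" using assms by (auto intro: coeff_eq_0)
  moreover have "degree (p * q) < m + n"
    using False assms degree_mult_le[of p q] by linarith
  ultimately show ?thesis by (auto simp: coeff_eq_0)
qed

definition Qd :: "nat \<Rightarrow> (nat \<Rightarrow> real) \<Rightarrow> (nat \<Rightarrow> real) \<Rightarrow> (real \<Rightarrow> real) \<Rightarrow> real" where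
  "Qd k As xs f = (\<Sum>j\<le>Suc k. As j * f (xs j))"

definition Rq :: "nat \<Rightarrow> real \<Rightarrow> real \<Rightarrow> (nat \<Rightarrow> real) \<Rightarrow> (nat \<Rightarrow> real) \<Rightarrow> real poly \<Rightarrow> real" where
  "Rq k c d As xs p = J c d p - Qd k As xs (poly p)"

definition Ms :: "(nat \<Rightarrow> real) \<Rightarrow> (nat \<Rightarrow> real) \<Rightarrow> real poly \<Rightarrow> nat \<Rightarrow> real" where
  "Ms As xs p j = poly p (xs 0) + (\<Sum>l\<le>j. As l * poly (pderiv p) (xs l))"

lemma Rq_diff_smult: "Rq k c d As xs (p - smult a q) = Rq k c d As xs p - a * Rq k c d As xs q"
  unfolding Rq_def Qd_def J_diff J_smult poly_diff poly_smult
  by (simp add: algebra_simps sum_subtractf sum_distrib_left)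

lemma abel:
  fixes M f :: "nat \<Rightarrow> real"
  shows "(\<Sum>j\<le>k. M j * (f j - f (Suc j))) = M 0 * f 0 + (\<Sum>j<k. (M (Suc j) - M j) * f (Suc j)) - M k * f (Suc k)"
  by (induction k) (auto simp: algebra_simps)

lemma sum_split_ends:
  fixes g :: "nat \<Rightarrow> real"
  shows "(\<Sum>j\<le>Suc k. g j) = g 0 + (\<Sum>j<k. g (Suc j)) + g (Suc k)"
proof -
  have "(\<Sum>j\<le>k. g j) = g 0 + (\<Sum>j<k. g (Suc j))"
    by (metis lessThan_Suc_atMost sum.lessThan_Suc_shift)
  then show ?thesis by (simp only: sum.atMost_Suc)
qed

lemma flux_identity:
  assumes hQ: "poly p (xs (Suc k)) - poly p (xs 0) = (\<Sum>l\<le>Suc k. As l * poly (pderiv p) (xs l))"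
  shows "(\<Sum>j\<le>k. Ms As xs p j * (f j - f (Suc j))) =
    (\<Sum>j\<le>Suc k. As j * f j * poly (pderiv p) (xs j)) + poly p (xs 0) * f 0 - poly p (xs (Suc k)) * f (Suc k)"
proof -
  have m: "Ms As xs p (Suc j) - Ms As xs p j = As (Suc j) * poly (pderiv p) (xs (Suc j))" for j
    by (simp add: Ms_def)
  have mk: "Ms As xs p k = poly p (xs (Suc k)) - As (Suc k) * poly (pderiv p) (xs (Suc k))"
    using hQ by (simp add: Ms_def)
  have m0: "Ms As xs p 0 = poly p (xs 0) + As 0 * poly (pderiv p) (xs 0)" by (simp add: Ms_def)
  show ?thesis unfolding abel m mk m0 sum_split_ends[of _ k]
    by (simp add: algebra_simps)
qed


lemma central_binom_rec_nat:
  "((2 * Suc n) choose Suc n) * Suc n = 2 * (2 * n + 1) * ((2 * n) choose n)"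
proof -
  have e: "2 * Suc n = Suc (Suc (2 * n))" by simp
  have 1: "Suc n * (Suc (Suc (2 * n)) choose Suc n) = Suc (Suc (2 * n)) * (Suc (2 * n) choose n)"
    by (rule Suc_times_binomial)
  have 2: "Suc n * (Suc (2 * n) choose Suc n) = Suc (2 * n) * ((2 * n) choose n)"
    by (rule Suc_times_binomial)
  have 3: "Suc (2 * n) choose n = Suc (2 * n) choose Suc n"
    using binomial_symmetric[of n "Suc (2 * n)"] by (simp add: Suc_diff_le)
  have "Suc n * (Suc n * (Suc (Suc (2 * n)) choose Suc n)) = Suc n * (Suc (Suc (2 * n)) * (Suc (2 * n) choose Suc n))"
    by (simp only: 1 3)
  also have "\<dots> = Suc (Suc (2 * n)) * (Suc n * (Suc (2 * n) choose Suc n))"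
    by (simp only: mult.left_commute)
  also have "\<dots> = Suc (Suc (2 * n)) * (Suc (2 * n) * ((2 * n) choose n))"
    by (simp only: 2)
  also have "\<dots> = Suc n * (2 * (2 * n + 1) * ((2 * n) choose n))"
    by simp
  finally have "Suc n * (Suc n * (Suc (Suc (2 * n)) choose Suc n)) = Suc n * (2 * (2 * n + 1) * ((2 * n) choose n))" .
  then have "Suc n * (Suc (Suc (2 * n)) choose Suc n) = 2 * (2 * n + 1) * ((2 * n) choose n)"
    by (simp only: mult_left_cancel[of "Suc n"] nat.simps simp_thms)
  then show ?thesis unfolding e by (simp only: mult.commute)
qed

lemma central_binom_rec:
  "real ((2 * Suc n) choose Suc n) * real (Suc n) = 2 * (2 * real n + 1) * real ((2 * n) choose n)"
proof -
  have "real (((2 * Suc n) choose Suc n) * Suc n) = real (2 * (2 * n + 1) * ((2 * n) choose n))"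
    by (simp only: central_binom_rec_nat)
  then show ?thesis by (simp only: of_nat_mult of_nat_add of_nat_1 of_nat_numeral)
qed

lemma arith_key:
  fixes K h l0 l1 l2 \<rho> \<beta> JJ :: real
  assumes K: "K \<ge> 1" and h: "h > 0" and l0: "l0 \<noteq> 0"
    and E: "l1 * l2 * ((K + 1) * (2 * K - 1)) = K * (2 * K + 1) * l0 ^ 2"
    and T: "h / (2 * K - 1) + l1 * l2 * \<rho> > 0"
    and Jb: "JJ \<ge> ((K + 1) * \<beta> / l0) ^ 2 * (h / (2 * K + 1))"
    and z: "JJ + K * (K + 1) * \<beta> ^ 2 * \<rho> = 0"
  shows "\<beta> = 0"
proof (rule ccontr)
  assume b: "\<beta> \<noteq> 0"
  have k1: "2 * K - 1 > 0" "K + 1 > 0" "2 * K + 1 > 0" using K by auto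
  have l12: "l1 * l2 = K * (2 * K + 1) * l0 ^ 2 / ((K + 1) * (2 * K - 1))"
  proof -
    have "(K + 1) * (2 * K - 1) \<noteq> 0" using k1 by simp
    then show ?thesis by (subst eq_divide_eq) (simp only: E if_True not_False_eq_True refl)
  qed
  have T2: "(2 * K - 1) * (h / (2 * K - 1) + l1 * l2 * \<rho>) > 0" using T k1 by simp
  have T3: "(2 * K - 1) * (h / (2 * K - 1) + l1 * l2 * \<rho>) = h + K * (2 * K + 1) * l0 ^ 2 * \<rho> / (K + 1)"
  proof -
    have g: "M * (h / M + A / (N * M) * \<rho>) = h + A * \<rho> / N" if "M \<noteq> 0" "N \<noteq> 0" for M N A :: real
      using that by (simp add: field_simps)
    show ?thesis unfolding l12 by (rule g) (use k1 in auto)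
  qed
  define q where "q = (K + 1) * \<beta> ^ 2 / ((2 * K + 1) * l0 ^ 2)"
  have q: "q > 0" unfolding q_def using k1 b l0 by (intro divide_pos_pos mult_pos_pos) auto
  have id: "((K + 1) * \<beta> / l0) ^ 2 * (h / (2 * K + 1)) + K * (K + 1) * \<beta> ^ 2 * \<rho> =
     q * (K + 1) * (h + K * (2 * K + 1) * l0 ^ 2 * \<rho> / (K + 1))"
  proof -
    have g: "((P * \<beta> / l0) ^ 2 * (h / Q)) + K * P * \<beta> ^ 2 * \<rho> = (P * \<beta> ^ 2 / (Q * l0 ^ 2)) * P * (h + K * Q * l0 ^ 2 * \<rho> / P)"
      if "P \<noteq> 0" "Q \<noteq> 0" for P Q :: real using that l0 by (simp add: field_simps power2_eq_square)
    show ?thesis unfolding q_def by (rule g) (use k1 in auto)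
  qed
  have "q * (K + 1) * (h + K * (2 * K + 1) * l0 ^ 2 * \<rho> / (K + 1)) > 0"
    using q k1 T2 T3 by simp
  then show False using Jb z id by linarith
qed

locale cell =
  fixes k :: nat and c d :: real and xs As :: "nat \<Rightarrow> real"
  assumes k1: "1 \<le> k" and cd: "c < d" and x0: "xs 0 = c" and xk: "xs (Suc k) = d"
    and ex: "\<And>p. degree p \<le> 2 * k - 1 \<Longrightarrow> J c d p - Qd k As xs (poly p) = 0"
begin

lemma quad_exact_deriv:
  assumes "degree w \<le> k"
  shows "poly w (xs (Suc k)) - poly w (xs 0) = (\<Sum>l\<le>Suc k. As l * poly (pderiv w) (xs l))"
proof -
  have "degree (pderiv w) \<le> 2 * k - 1" using assms k1 by (simp add: degree_pderiv)
  then have "J c d (pderiv w) = Qd k As xs (poly (pderiv w))" using ex by simp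
  then show ?thesis using J_ftc[of c d w] cd x0 xk by (simp add: Qd_def)
qed

lemma Ms_identity:
  assumes V0: "poly V (xs 0) = 0" and dw: "degree w \<le> k"
  shows "(\<Sum>j\<le>k. Ms As xs w j * (poly V (xs (Suc j)) - poly V (xs j))) =
    J c d (pderiv V * w) + Rq k c d As xs (pderiv w * V)"
proof -
  define f where "f j = poly V (xs j)" for j
  have "(\<Sum>j\<le>k. Ms As xs w j * (poly V (xs (Suc j)) - poly V (xs j))) =
     - (\<Sum>j\<le>k. Ms As xs w j * (f j - f (Suc j)))"
    by (simp add: f_def sum_negf[symmetric] algebra_simps)
  also have "\<dots> = - ((\<Sum>j\<le>Suc k. As j * f j * poly (pderiv w) (xs j)) + poly w (xs 0) * f 0 - poly w (xs (Suc k)) * f (Suc k))"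
    by (simp only: flux_identity[OF quad_exact_deriv[OF dw]])
  also have "\<dots> = poly w d * poly V d - Qd k As xs (poly (pderiv w * V))"
    by (simp add: f_def V0 Qd_def xk algebra_simps)
  also have "poly w d * poly V d = J c d (pderiv (V * w))"
    using J_ftc[of c d "V * w"] cd V0 x0 by simp
  also have "J c d (pderiv (V * w)) = J c d (pderiv V * w) + J c d (pderiv w * V)"
    by (simp add: pderiv_mult J_add algebra_simps)
  finally show ?thesis by (simp add: Rq_def Qd_def)
qed

lemma Rq_top:
  assumes "degree P \<le> 2 * k"
  shows "Rq k c d As xs P = coeff P (2 * k) * Rq k c d As xs ([:-d,1:] ^ (2 * k))"
proof -
  have "degree (P - smult (coeff P (2 * k)) ([:-d,1:] ^ (2 * k))) < 2 * k"
    by (rule deg_drop[OF assms]) (use k1 in simp)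
  then have "Rq k c d As xs (P - smult (coeff P (2 * k)) ([:-d,1:] ^ (2 * k))) = 0"
    unfolding Rq_def by (intro ex) simp
  then show ?thesis unfolding Rq_diff_smult by simp
qed

end

context cell begin

lemma J_sq_zero:
  assumes "J c d (v * v) = 0" shows "v = 0"
proof (rule ccontr)
  assume nz: "v \<noteq> 0"
  have "continuous_on {c..d} (\<lambda>x. poly (v * v) x)" by (intro continuous_intros)
  moreover have "\<And>x. x \<in> {c..d} \<Longrightarrow> 0 \<le> poly (v * v) x" by simp
  ultimately have "(integral {c..d} (\<lambda>x. poly (v * v) x) = 0) = (\<forall>x\<in>{c..d}. poly (v * v) x = 0)"
    using cd by (intro integral_eq_0_iff) auto
  then have "\<forall>x\<in>{c..d}. poly (v * v) x = 0" using assms unfolding J_def by blast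
  then have "{c..d} \<subseteq> {x. poly v x = 0}" by auto
  moreover have "finite {x. poly v x = 0}" by (rule poly_roots_finite[OF nz])
  ultimately have "finite {c..d}" by (rule finite_subset)
  then show False using infinite_Icc[OF cd] by simp
qed

lemma J_sq_nonneg: "0 \<le> J c d (r * r)"
  unfolding J_def by (rule integral_nonneg) (auto intro: J_integrable)

lemma positivity:
  assumes pos: "(d - c) / (2 * real k - 1) - Qd k As xs (\<lambda>y. shifted_legendre c d (Suc k) y * shifted_legendre c d (k - 1) y) > 0"
    and dV: "degree V \<le> Suc k"
    and z: "J c d (pderiv V * pderiv V) + Rq k c d As xs (pderiv (pderiv V) * V) = 0"
  shows "pderiv V = 0"
proof -
  define h where "h = d - c"
  define X where "X = [:-d,1::real:]"
  define \<rho> where "\<rho> = Rq k c d As xs (X ^ (2 * k))"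
  define v where "v = pderiv V"
  define \<beta> where "\<beta> = coeff V (Suc k)"
  define l0 where "l0 = coeff (Lp c d k) k"
  define l1 where "l1 = coeff (Lp c d (Suc k)) (Suc k)"
  define l2 where "l2 = coeff (Lp c d (k - 1)) (k - 1)"
  have hpos: "h > 0" using cd by (simp add: h_def)
  have K: "real k \<ge> 1" using k1 by simp
  have dv: "degree v \<le> k" using dV by (simp add: v_def degree_pderiv)
  have cv: "coeff v k = real (Suc k) * \<beta>" by (simp add: v_def \<beta>_def coeff_pderiv)
  have dv': "degree (pderiv v) \<le> k - 1" using dv by (simp add: degree_pderiv)
  have cv': "coeff (pderiv v) (k - 1) = real k * coeff v k"
    using k1 by (simp add: coeff_pderiv)
  have kk: "k - 1 + Suc k = 2 * k" using k1 by simp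
  have c2k: "coeff (pderiv v * V) (2 * k) = real k * real (Suc k) * \<beta> ^ 2"
    using coeff_mult_le[OF dv' dV] unfolding kk cv' cv by (simp add: \<beta>_def power2_eq_square)
  have d2k: "degree (pderiv v * V) \<le> 2 * k"
    using degree_mult_le[of "pderiv v" V] dv' dV kk by linarith
  have R1: "Rq k c d As xs (pderiv v * V) = real k * (real k + 1) * \<beta> ^ 2 * \<rho>"
    using Rq_top[OF d2k] c2k by (simp add: \<rho>_def X_def)
  define P where "P = Lp c d (Suc k) * Lp c d (k - 1)"
  have JP: "J c d P = 0" unfolding P_def
    by (rule Lp_orth[OF cd]) (use degree_Lp[of c d "k - 1"] in simp)
  have kk2: "Suc k + (k - 1) = 2 * k" using k1 by simp
  have dP: "degree P \<le> 2 * k" unfolding P_def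
    using degree_mult_le[of "Lp c d (Suc k)" "Lp c d (k - 1)"] degree_Lp[of c d "Suc k"] degree_Lp[of c d "k - 1"] kk2
    by linarith
  have cP: "coeff P (2 * k) = l1 * l2"
    using coeff_mult_le[OF degree_Lp degree_Lp, of c d "Suc k" c d "k - 1"] unfolding kk2 P_def l1_def l2_def .
  have QP: "Qd k As xs (\<lambda>y. shifted_legendre c d (Suc k) y * shifted_legendre c d (k - 1) y) = Qd k As xs (poly P)"
    by (simp add: P_def shifted_legendre_Lp Qd_def)
  have QP2: "Qd k As xs (poly P) = - (l1 * l2 * \<rho>)"
    using Rq_top[OF dP] JP cP by (simp add: Rq_def \<rho>_def X_def)
  have T: "h / (2 * real k - 1) + l1 * l2 * \<rho> > 0" using pos QP QP2 by (simp add: h_def)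
  have l0v: "l0 = real ((2 * k) choose k) / h ^ k" unfolding l0_def h_def by (rule coeff_Lp)
  have l1v: "l1 = real ((2 * Suc k) choose Suc k) / h ^ Suc k" unfolding l1_def h_def by (rule coeff_Lp)
  have l2v: "l2 = real ((2 * (k - 1)) choose (k - 1)) / h ^ (k - 1)" unfolding l2_def h_def by (rule coeff_Lp)
  have l0nz: "l0 \<noteq> 0" unfolding l0v using hpos by simp
  have E: "l1 * l2 * ((real k + 1) * (2 * real k - 1)) = real k * (2 * real k + 1) * l0 ^ 2"
  proof -
    define K where "K = real k"
    define B0 where "B0 = real ((2 * k) choose k)"
    define B1 where "B1 = real ((2 * Suc k) choose Suc k)"
    define B2 where "B2 = real ((2 * (k - 1)) choose (k - 1))"
    have r1: "B1 * (K + 1) = 2 * (2 * K + 1) * B0"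
      using central_binom_rec[of k] by (simp add: B1_def B0_def K_def add.commute)
    have r2: "B0 * K = 2 * (2 * K - 1) * B2"
    proof -
      have sk: "Suc (k - 1) = k" using k1 by simp
      have rk: "real (k - 1) = K - 1" using k1 by (simp add: K_def of_nat_diff)
      show ?thesis using central_binom_rec[of "k - 1"] unfolding sk rk
        by (simp add: B0_def B2_def K_def algebra_simps)
    qed
    have B: "B1 * B2 * ((K + 1) * (2 * K - 1)) = K * (2 * K + 1) * B0 ^ 2"
    proof -
      have "B1 * B2 * ((K + 1) * (2 * K - 1)) = (B1 * (K + 1)) * (B2 * (2 * K - 1))" by (simp add: algebra_simps)
      also have "\<dots> = (2 * (2 * K + 1) * B0) * (B2 * (2 * K - 1))" by (simp only: r1)
      also have "\<dots> = (2 * K + 1) * B0 * (2 * (2 * K - 1) * B2)" by (simp add: algebra_simps)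
      also have "\<dots> = (2 * K + 1) * B0 * (B0 * K)" by (simp only: r2)
      also have "\<dots> = K * (2 * K + 1) * B0 ^ 2" by (simp add: algebra_simps power2_eq_square)
      finally show ?thesis .
    qed
    have hh: "h ^ Suc k * h ^ (k - 1) = (h ^ k) ^ 2"
    proof -
      have "Suc k + (k - 1) = k * 2" using k1 by simp
      then show ?thesis by (simp only: power_add[symmetric] power_mult)
    qed
    have g: "B1 / P * (B2 / Q) * M = N * (B0 / R) ^ 2"
      if "P * Q = R ^ 2" "R \<noteq> 0" "B1 * B2 * M = N * B0 ^ 2" for P Q R M N :: real
    proof -
      have "P \<noteq> 0" "Q \<noteq> 0" using that(1,2) by auto
      then have "B1 / P * (B2 / Q) * M = (B1 * B2 * M) / (P * Q)" by (simp add: field_simps)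
      also have "\<dots> = N * B0 ^ 2 / R ^ 2" unfolding that(1,3) ..
      finally show ?thesis by (simp add: power_divide)
    qed
    show ?thesis unfolding l1v l2v l0v B0_def[symmetric] B1_def[symmetric] B2_def[symmetric] K_def[symmetric]
      by (rule g[OF hh]) (use hpos B in auto)
  qed
  define \<alpha> where "\<alpha> = coeff v k / l0"
  define r where "r = v - smult \<alpha> (Lp c d k)"
  have cr: "coeff r k = 0" unfolding r_def \<alpha>_def l0_def using l0nz[unfolded l0_def] by simp
  have dr0: "degree r \<le> k" unfolding r_def
    by (rule degree_diff_le[OF dv]) (rule order.trans[OF degree_smult_le degree_Lp])
  have dr: "degree r < k" using deg_drop[OF dr0, of "-d"] k1 cr by simp
  have vr: "v = smult \<alpha> (Lp c d k) + r" by (simp add: r_def)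
  have "v * v = smult (\<alpha> * \<alpha>) (Lp c d k * Lp c d k) + (smult \<alpha> (Lp c d k * r) + smult \<alpha> (Lp c d k * r)) + r * r"
    unfolding vr by (simp add: algebra_simps)
  then have "J c d (v * v) = \<alpha> * \<alpha> * J c d (Lp c d k * Lp c d k) + 2 * \<alpha> * J c d (Lp c d k * r) + J c d (r * r)"
    by (simp only: J_add J_smult)
  also have "J c d (Lp c d k * r) = 0" by (rule Lp_orth[OF cd dr])
  also have "J c d (Lp c d k * Lp c d k) = h / (2 * real k + 1)" unfolding h_def by (rule Lp_norm[OF cd]) (use k1 in simp)
  finally have Jv: "J c d (v * v) = \<alpha> ^ 2 * (h / (2 * real k + 1)) + J c d (r * r)"
    by (simp add: power2_eq_square)
  have Jb: "J c d (v * v) \<ge> ((real k + 1) * \<beta> / l0) ^ 2 * (h / (2 * real k + 1))"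
  proof -
    have e: "real (Suc k) = real k + 1" by simp
    show ?thesis using Jv J_sq_nonneg[of r] unfolding \<alpha>_def cv e by linarith
  qed
  have z': "J c d (v * v) + real k * (real k + 1) * \<beta> ^ 2 * \<rho> = 0"
    using z R1 by (simp add: v_def)
  have b0: "\<beta> = 0" by (rule arith_key[OF K hpos l0nz E T Jb z'])
  then have "J c d (v * v) = 0" using z' by simp
  then show ?thesis using J_sq_zero v_def by simp
qed

end

lemma interp:
  fixes xs ys :: "nat \<Rightarrow> real"
  assumes inj: "\<And>i j. i \<le> n \<Longrightarrow> j \<le> n \<Longrightarrow> xs i = xs j \<Longrightarrow> i = j"
  shows "\<exists>V. degree V \<le> n \<and> (\<forall>m\<le>n. poly V (xs m) = ys m)"
proof -
  define B where "B j = (\<Prod>l\<in>{..n}-{j}. [:- xs l, 1:])" for j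
  define V where "V = (\<Sum>j\<le>n. smult (ys j / (\<Prod>l\<in>{..n}-{j}. (xs j - xs l))) (B j))"
  have dB: "degree (B j) \<le> n" if "j \<le> n" for j
  proof -
    have "degree (B j) \<le> (\<Sum>l\<in>{..n}-{j}. degree [:- xs l, 1::real:])"
      unfolding B_def using degree_prod_sum_le[of "{..n}-{j}" "\<lambda>l. [:- xs l, 1::real:]"] by (simp add: o_def)
    also have "\<dots> = card ({..n}-{j})" by simp
    also have "\<dots> = n" using that by simp
    finally show ?thesis .
  qed
  have dV: "degree V \<le> n" unfolding V_def
    by (rule degree_sum_le) (auto intro: order.trans[OF degree_smult_le] dB)
  have pV: "poly V (xs m) = ys m" if m: "m \<le> n" for m
  proof -
    have "poly V (xs m) = (\<Sum>j\<le>n. if j = m then ys m else 0)"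
      unfolding V_def poly_sum
    proof (intro sum.cong refl)
      fix j assume j: "j \<in> {..n}"
      have pB: "poly (B j) (xs m) = (\<Prod>l\<in>{..n}-{j}. (xs m - xs l))"
        unfolding B_def poly_prod by simp
      show "poly (smult (ys j / (\<Prod>l\<in>{..n}-{j}. (xs j - xs l))) (B j)) (xs m) = (if j = m then ys m else 0)"
      proof (cases "j = m")
        case True
        have "(\<Prod>l\<in>{..n}-{j}. (xs j - xs l)) \<noteq> 0"
          using inj j by (auto simp: prod_zero_iff)
        then show ?thesis using True pB by simp
      next
        case False
        have "(\<Prod>l\<in>{..n}-{j}. (xs m - xs l)) = 0"
          using False m by (intro prod_zero) auto
        then show ?thesis using False pB by simp
      qed
    qed
    then show ?thesis using m by simp
  qed
  show ?thesis using dV pV by blast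
qed


lemma strict_mono_upto:
  fixes xs :: "nat \<Rightarrow> real"
  assumes "\<And>j. j \<le> k \<Longrightarrow> xs j < xs (Suc j)"
  shows "i < j \<Longrightarrow> j \<le> Suc k \<Longrightarrow> xs i < xs j"
proof (induction j)
  case 0 then show ?case by simp
next
  case (Suc j)
  have s: "xs j < xs (Suc j)" using assms Suc by simp
  show ?case
  proof (cases "i = j")
    case True then show ?thesis using s by simp
  next
    case False then have "xs i < xs j" using Suc by simp
    then show ?thesis using s by simp
  qed
qed

lemma (in cell) injectivity:
  assumes pos: "(d - c) / (2 * real k - 1) - Qd k As xs (\<lambda>y. shifted_legendre c d (Suc k) y * shifted_legendre c d (k - 1) y) > 0"
    and mono: "\<And>j. j \<le> k \<Longrightarrow> xs j < xs (Suc j)"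
    and H: "\<And>w. degree w \<le> k \<Longrightarrow> (\<Sum>j\<le>k. Ms As xs w j * e j) = 0"
  shows "\<And>j. j \<le> k \<Longrightarrow> e j = 0"
proof -
  have injx: "i = j" if "i \<le> Suc k" "j \<le> Suc k" "xs i = xs j" for i j
    using strict_mono_upto[of k xs i j] strict_mono_upto[of k xs j i] mono that
    by (metis less_irrefl nat_neq_iff)
  obtain V where dV: "degree V \<le> Suc k" and pV: "\<And>m. m \<le> Suc k \<Longrightarrow> poly V (xs m) = (\<Sum>l<m. e l)"
    using interp[of "Suc k" xs "\<lambda>m. \<Sum>l<m. e l"] injx by blast
  have V0: "poly V (xs 0) = 0" using pV[of 0] by simp
  have diff: "poly V (xs (Suc j)) - poly V (xs j) = e j" if "j \<le> k" for j
    using pV[of "Suc j"] pV[of j] that by simp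
  have dw: "degree (pderiv V) \<le> k" using dV by (simp add: degree_pderiv)
  have "(\<Sum>j\<le>k. Ms As xs (pderiv V) j * (poly V (xs (Suc j)) - poly V (xs j))) = 0"
    using H[OF dw] by (simp add: diff)
  then have "J c d (pderiv V * pderiv V) + Rq k c d As xs (pderiv (pderiv V) * V) = 0"
    using Ms_identity[OF V0 dw] by simp
  then have "pderiv V = 0" by (rule positivity[OF pos dV])
  then have "degree V = 0" by (simp add: pderiv_eq_0_iff)
  then obtain a where "V = [:a:]" by (metis degree_eq_zeroE)
  then have const: "poly V y = poly V (xs 0)" for y by simp
  fix j assume "j \<le> k"
  then show "e j = 0" using diff[of j] const[of "xs (Suc j)"] const[of "xs j"] by simp
qed

theorem theorem3p11:
  fixes a b :: real and N k :: nat
    and xI :: "nat \<Rightarrow> real" and x A :: "nat \<Rightarrow> nat \<Rightarrow> real"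
    and ut :: "nat \<Rightarrow> real poly"
    and fhat :: "nat \<Rightarrow> nat \<Rightarrow> real" and fI :: "nat \<Rightarrow> real"
  assumes "mesh a b N k xI x"
    and "assumption_S N k xI x A"
    and "in_Vk N k ut"
    and "\<forall>i<N. fhat i 0 = fI i \<and> fhat i (Suc k) = fI (Suc i)"
  shows "(\<forall>ws :: nat \<Rightarrow> nat \<Rightarrow> real.
            ip_star_fun N k x ut ws = (\<Sum>i<N. \<Sum>j\<le>k. ws i j * (fhat i j - fhat i (Suc j))))
         \<longleftrightarrow>
         (\<forall>w :: nat \<Rightarrow> real poly. in_Vk N k w \<longrightarrow>
            ip_star N k A x ut w =
              (\<Sum>i<N. (\<Sum>j\<le>Suc k. A i j * fhat i j * poly (pderiv (w i)) (x i j))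
                 + poly (w i) (xI i) * fI i - poly (w i) (xI (Suc i)) * fI (Suc i)))"
proof -
  note M = assms(1)[unfolded mesh_def]
  note S = assms(2)[unfolded assumption_S_def]
  have S1: "\<And>i p. i < N \<Longrightarrow> degree p \<le> 2 * k - 1 \<Longrightarrow> integral {xI i .. xI (Suc i)} (poly p) - quad k A x i (poly p) = 0"
    using S by blast
  have S2: "\<And>i. i < N \<Longrightarrow> (xI (Suc i) - xI i) / (2 * real k - 1)
          - quad k A x i (\<lambda>y. shifted_legendre (xI i) (xI (Suc i)) (Suc k) y
                              * shifted_legendre (xI i) (xI (Suc i)) (k - 1) y) > 0"
    using S by blast
  have qQ: "quad k A x i f = Qd k (A i) (x i) f" for i f by (simp add: quad_def Qd_def)
  have mono: "\<And>j. j \<le> k \<Longrightarrow> x i j < x i (Suc j)" if "i < N" for i using M that by blast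
  have x0: "x i 0 = xI i" and xk: "x i (Suc k) = xI (Suc i)" if "i < N" for i using M that by auto
  have cellI: "cell k (xI i) (xI (Suc i)) (x i) (A i)" if i: "i < N" for i
  proof
    show "1 \<le> k" using S by blast
    show "xI i < xI (Suc i)" using strict_mono_upto[of k "x i" 0 "Suc k"] mono[OF i] x0[OF i] xk[OF i] by simp
    show "x i 0 = xI i" by (rule x0[OF i])
    show "x i (Suc k) = xI (Suc i)" by (rule xk[OF i])
    fix p :: "real poly" assume "degree p \<le> 2 * k - 1"
    then show "J (xI i) (xI (Suc i)) p - Qd k (A i) (x i) (poly p) = 0"
      using S1[OF i, of p] unfolding J_def qQ by blast
  qed
  have pos: "(xI (Suc i) - xI i) / (2 * real k - 1) - Qd k (A i) (x i) (\<lambda>y. shifted_legendre (xI i) (xI (Suc i)) (Suc k) y * shifted_legendre (xI i) (xI (Suc i)) (k - 1) y) > 0"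
    if "i < N" for i using S2[OF that] unfolding qQ .
  have MsE: "Mstar A x w i j = Ms (A i) (x i) (w i) j" for w i j by (simp add: Mstar_def Ms_def)
  define RHS where "RHS w i = (\<Sum>j\<le>Suc k. A i j * fhat i j * poly (pderiv (w i)) (x i j))
                 + poly (w i) (xI i) * fI i - poly (w i) (xI (Suc i)) * fI (Suc i)" for w i
  define I where "I i j = integral {x i j .. x i (Suc j)} (poly (ut i))" for i j
  define F where "F i j = fhat i j - fhat i (Suc j)" for i j
  have FL: "(\<Sum>j\<le>k. Mstar A x w i j * F i j) = RHS w i" if i: "i < N" and dw: "degree (w i) \<le> k" for w i
  proof -
    have "(\<Sum>j\<le>k. Mstar A x w i j * F i j) = (\<Sum>j\<le>k. Ms (A i) (x i) (w i) j * (fhat i j - fhat i (Suc j)))"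
      by (simp add: MsE F_def)
    also have "\<dots> = (\<Sum>j\<le>Suc k. A i j * fhat i j * poly (pderiv (w i)) (x i j)) + poly (w i) (x i 0) * fhat i 0 - poly (w i) (x i (Suc k)) * fhat i (Suc k)"
      by (rule flux_identity[OF cell.quad_exact_deriv[OF cellI[OF i] dw]])
    also have "\<dots> = RHS w i" using assms(4) i x0[OF i] xk[OF i] by (simp add: RHS_def)
    finally show ?thesis .
  qed
  have ipE: "ip_star N k A x ut w = (\<Sum>i<N. \<Sum>j\<le>k. Mstar A x w i j * I i j)" for w
    by (simp add: ip_star_def ip_star_fun_def I_def)
  have ipfE: "ip_star_fun N k x ut ws = (\<Sum>i<N. \<Sum>j\<le>k. ws i j * I i j)" for ws
    by (simp add: ip_star_fun_def I_def)
  have eqv: "?thesis \<longleftrightarrow> ((\<forall>ws. ip_star_fun N k x ut ws = (\<Sum>i<N. \<Sum>j\<le>k. ws i j * (fhat i j - fhat i (Suc j))))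
     \<longleftrightarrow> (\<forall>w. in_Vk N k w \<longrightarrow> ip_star N k A x ut w = (\<Sum>i<N. RHS w i)))"
    by (simp add: RHS_def)
  show ?thesis unfolding eqv
  proof
    assume L: "\<forall>ws. ip_star_fun N k x ut ws = (\<Sum>i<N. \<Sum>j\<le>k. ws i j * (fhat i j - fhat i (Suc j)))"
    show "\<forall>w. in_Vk N k w \<longrightarrow> ip_star N k A x ut w = (\<Sum>i<N. RHS w i)"
    proof (intro allI impI)
      fix w assume w: "in_Vk N k w"
      have "ip_star N k A x ut w = (\<Sum>i<N. \<Sum>j\<le>k. Mstar A x w i j * F i j)"
        using L[rule_format, of "Mstar A x w"] by (simp add: ip_star_def F_def)
      also have "\<dots> = (\<Sum>i<N. RHS w i)"
        using w by (intro sum.cong refl FL) (auto simp: in_Vk_def)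
      finally show "ip_star N k A x ut w = (\<Sum>i<N. RHS w i)" .
    qed
  next
    assume R: "\<forall>w. in_Vk N k w \<longrightarrow> ip_star N k A x ut w = (\<Sum>i<N. RHS w i)"
    have IF: "I i0 j = F i0 j" if i0: "i0 < N" and j: "j \<le> k" for i0 j
    proof -
      have "\<And>j. j \<le> k \<Longrightarrow> I i0 j - F i0 j = 0"
      proof (rule cell.injectivity[OF cellI[OF i0] pos[OF i0] mono[OF i0]])
        fix w0 :: "real poly" assume dw0: "degree w0 \<le> k"
        define w where "w i = (if i = i0 then w0 else 0)" for i
        have wV: "in_Vk N k w" using dw0 by (simp add: in_Vk_def w_def)
        define G where "G i = (\<Sum>j\<le>k. Mstar A x w i j * I i j) - RHS w i" for i
        have "ip_star N k A x ut w = (\<Sum>i<N. RHS w i)" using R wV by blast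
        then have "(\<Sum>i<N. G i) = 0" unfolding G_def ipE sum_subtractf by simp
        moreover have Gz: "G i = 0" if "i \<noteq> i0" for i
          using that by (simp add: G_def w_def RHS_def Mstar_def)
        moreover have "(\<Sum>i<N. G i) = G i0 + (\<Sum>i\<in>{..<N}-{i0}. G i)"
          using i0 by (subst sum.remove[of _ i0]) auto
        ultimately have G0: "G i0 = 0" by simp
        have "RHS w i0 = (\<Sum>j\<le>k. Mstar A x w i0 j * F i0 j)"
          using FL[OF i0, of w] dw0 by (simp add: w_def)
        then have "(\<Sum>j\<le>k. Mstar A x w i0 j * (I i0 j - F i0 j)) = 0"
          using G0 unfolding G_def by (simp add: algebra_simps sum_subtractf)
        then show "(\<Sum>j\<le>k. Ms (A i0) (x i0) w0 j * (I i0 j - F i0 j)) = 0"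
          by (simp add: MsE w_def)
      qed
      then show ?thesis using j by simp
    qed
    show "\<forall>ws. ip_star_fun N k x ut ws = (\<Sum>i<N. \<Sum>j\<le>k. ws i j * (fhat i j - fhat i (Suc j)))"
    proof
      fix ws
      show "ip_star_fun N k x ut ws = (\<Sum>i<N. \<Sum>j\<le>k. ws i j * (fhat i j - fhat i (Suc j)))"
        unfolding ipfE using IF by (intro sum.cong refl) (simp add: F_def)
    qed
  qed
qed

end
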